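(* Let $\Omega_0$ be a distribution of a finite alphabet $\Sigma$ and $\mathsf{Obs}$ an observation function over $\Sigma$ with $\Omega_0\not\models\mathsf{Obs}$. Consider any sequence of distributions defined by: while $\mathit{CED}(\Omega_k,\mathsf{Obs})\neq\emptyset$, choose a non-empty $S_k\subseteq\mathit{CED}(\Omega_k,\mathsf{Obs})$ and for each $ce\in S_k$ a discrepancy $\delta_{ce}\in\mathcal D(ce)$, and set $\Omega_{k+1}=\Omega_k\cup\{\delta_{ce}\mid ce\in S_k\}$. Then every such sequence is finite, and its last element $\Omega'$ satisfies $\Omega'\models\mathsf{Obs}$ and $\Omega_0\prec\Omega'$. If moreover $S_k=\mathit{CED}(\Omega_k,\mathsf{Obs})$ at every step, the number of steps is at most $|\mathcal P(\Sigma)|$.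
   Context: $\sigma|_{\Sigma'}$ is the projection of a word onto $\Sigma'$; $\mathcal P(\Sigma)$ is the power set. A distribution of $\Sigma$ is a finite set of subsets of $\Sigma$ with union $\Sigma$. An observation function is a partial map $\mathsf{Obs}:\Sigma^\star\rightharpoonup\{+,-\}$ with finite domain. $\Omega\models\mathsf{Obs}$ means there exist $\mathcal L_{\Sigma_i}\subseteq\Sigma_i^\star$ ($\Sigma_i\in\Omega$) such that $\mathcal L=\{w\mid\forall\Sigma_i\in\Omega.\ w|_{\Sigma_i}\in\mathcal L_{\Sigma_i}\}$ satisfies $\sigma\in\mathcal L\iff\mathsf{Obs}(\sigma)=+$ on $\mathsf{Dom}(\mathsf{Obs})$. A counter-example to $\Omega\models\mathsf{Obs}$ is a pair $(\sigma_N,P)$ with $\mathsf{Obs}(\sigma_N)=-$ and $P:\Omega\to\mathsf{Dom}(\mathsf{Obs})$ with $\mathsf{Obs}(P(\Sigma_i))=+$ and $\sigma_N|_{\Sigma_i}=P(\Sigma_i)|_{\Sigma_i}$ for all $\Sigma_i\in\Omega$; $\mathit{CED}(\Omega,\mathsf{Obs})$ is the set of these. Discrepancies: for $\Sigma_i\in\Omega$, $\mathcal D_m^{\Sigma_i}(\sigma_N,P)$ is the set of symbols occurring a different number of times in $\sigma_N$ and $P(\Sigma_i)$; with $\theta=\Sigma\setminus\mathcal D_m^{\Sigma_i}$, $u=\sigma_N|_\theta$, $w=P(\Sigma_i)|_\theta$, $\pi$ the unique position bijection with $u[j]=w[\pi(j)]$ preserving the relative order of equal symbols, $\mathcal D_o^{\Sigma_i}(\sigma_N,P)=\{\{u[j],u[k]\}\mid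 j<k,\ \pi(j)>\pi(k)\}$. $\delta\subseteq\Sigma$ is a discrepancy iff for each $\Sigma_i\in\Omega$, $\delta\cap\mathcal D_m^{\Sigma_i}\ne\emptyset$ or $\delta$ contains an element of $\mathcal D_o^{\Sigma_i}$; $\mathcal D(ce)$ denotes the set of discrepancies of $ce$. $\Omega\preccurlyeq\Omega'$ iff each element of $\Omega$ is contained in some element of $\Omega'$; $\Omega\prec\Omega'$ iff $\Omega\preccurlyeq\Omega'$ and $\Omega'\not\preccurlyeq\Omega$. *)

theory Defs
  imports Main "HOL-Library.FuncSet"
begin

definition proj :: "'a list \<Rightarrow> 'a set \<Rightarrow> 'a list" where
  "proj w A = filter (\<lambda>x. x \<in> A) w"

definition distribution :: "'a set \<Rightarrow> 'a set set \<Rightarrow> bool" where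
  "distribution Sg Omega \<longleftrightarrow> finite Omega \<and> (\<forall>A\<in>Omega. A \<subseteq> Sg) \<and> \<Union>Omega = Sg"

(* partial map Sg^* -> {+,-}, with + = True, - = False *)
definition observation :: "'a set \<Rightarrow> ('a list \<Rightarrow> bool option) \<Rightarrow> bool" where
  "observation Sg Obs \<longleftrightarrow> finite (dom Obs) \<and> dom Obs \<subseteq> lists Sg"

definition models :: "'a set \<Rightarrow> 'a set set \<Rightarrow> ('a list \<Rightarrow> bool option) \<Rightarrow> bool" where
  "models Sg Omega Obs \<longleftrightarrow>
     (\<exists>L :: 'a set \<Rightarrow> 'a list set.
        (\<forall>A\<in>Omega. L A \<subseteq> lists A) \<and>
        (let Lang = {w \<in> lists Sg. \<forall>A\<in>Omega. proj w A \<in> L A}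
         in \<forall>s\<in>dom Obs. (s \<in> Lang \<longleftrightarrow> Obs s = Some True)))"

definition CED :: "'a set set \<Rightarrow> ('a list \<Rightarrow> bool option)
                   \<Rightarrow> ('a list \<times> ('a set \<Rightarrow> 'a list)) set" where
  "CED Omega Obs =
     {(sN, P). Obs sN = Some False \<and> P \<in> Omega \<rightarrow>\<^sub>E dom Obs \<and>
        (\<forall>A\<in>Omega. Obs (P A) = Some True \<and> proj sN A = proj (P A) A)}"

definition Dm :: "'a set \<Rightarrow> ('a list \<times> ('a set \<Rightarrow> 'a list)) \<Rightarrow> 'a set" where
  "Dm A ce = {a. count_list (fst ce) a \<noteq> count_list (snd ce A) a}"

definition occ :: "'a list \<Rightarrow> nat \<Rightarrow> nat" where
  "occ u j = card {k. k < j \<and> u ! k = u ! j}"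

(* the order-preserving position bijection pi with u[j] = w[pi j] *)
definition posmap :: "'a list \<Rightarrow> 'a list \<Rightarrow> nat \<Rightarrow> nat" where
  "posmap u w j = (THE p. p < length w \<and> w ! p = u ! j \<and> occ w p = occ u j)"

definition Do :: "'a set \<Rightarrow> 'a set \<Rightarrow> ('a list \<times> ('a set \<Rightarrow> 'a list)) \<Rightarrow> 'a set set" where
  "Do Sg A ce =
     (let theta = Sg - Dm A ce; u = proj (fst ce) theta; w = proj (snd ce A) theta
      in {{u ! j, u ! k} | j k. j < k \<and> k < length u \<and> posmap u w j > posmap u w k})"

definition is_discrepancy :: "'a set \<Rightarrow> 'a set set \<Rightarrow> ('a list \<times> ('a set \<Rightarrow> 'a list))
                             \<Rightarrow> 'a set \<Rightarrow> bool" where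
  "is_discrepancy Sg Omega ce delta \<longleftrightarrow> delta \<subseteq> Sg \<and>
     (\<forall>A\<in>Omega. delta \<inter> Dm A ce \<noteq> {} \<or> (\<exists>p\<in>Do Sg A ce. p \<subseteq> delta))"

definition Disc :: "'a set \<Rightarrow> 'a set set \<Rightarrow> ('a list \<times> ('a set \<Rightarrow> 'a list)) \<Rightarrow> 'a set set" where
  "Disc Sg Omega ce = {delta. is_discrepancy Sg Omega ce delta}"

definition refines :: "'a set set \<Rightarrow> 'a set set \<Rightarrow> bool" where
  "refines Omega Omega' \<longleftrightarrow> (\<forall>A\<in>Omega. \<exists>B\<in>Omega'. A \<subseteq> B)"

definition strictly_refines :: "'a set set \<Rightarrow> 'a set set \<Rightarrow> bool" where
  "strictly_refines Omega Omega' \<longleftrightarrow> refines Omega Omega' \<and> \<not> refines Omega' Omega"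

definition step :: "'a set \<Rightarrow> ('a list \<Rightarrow> bool option) \<Rightarrow> 'a set set \<Rightarrow> 'a set set \<Rightarrow> bool" where
  "step Sg Obs Omega Omega' \<longleftrightarrow> CED Omega Obs \<noteq> {} \<and>
     (\<exists>S delta. S \<subseteq> CED Omega Obs \<and> S \<noteq> {} \<and>
        (\<forall>ce\<in>S. delta ce \<in> Disc Sg Omega ce) \<and> Omega' = Omega \<union> delta ` S)"

definition full_step :: "'a set \<Rightarrow> ('a list \<Rightarrow> bool option) \<Rightarrow> 'a set set \<Rightarrow> 'a set set \<Rightarrow> bool" where
  "full_step Sg Obs Omega Omega' \<longleftrightarrow> CED Omega Obs \<noteq> {} \<and>
     (\<exists>delta. (\<forall>ce\<in>CED Omega Obs. delta ce \<in> Disc Sg Omega ce) \<and>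
        Omega' = Omega \<union> delta ` CED Omega Obs)"

definition is_run :: "('b \<Rightarrow> 'b \<Rightarrow> bool) \<Rightarrow> 'b list \<Rightarrow> bool" where
  "is_run R xs \<longleftrightarrow> xs \<noteq> [] \<and> (\<forall>i. Suc i < length xs \<longrightarrow> R (xs ! i) (xs ! Suc i))"

end

theory Submission imports Defs begin

definition tk :: "'a list \<Rightarrow> ('a \<times> nat) list" where
  "tk xs = map (\<lambda>p. (xs!p, count_list (take p xs) (xs!p))) [0..<length xs]"

lemma tk_Nil[simp]: "tk [] = []" by (simp add: tk_def)

lemma tk_snoc[simp]: "tk (xs @ [c]) = tk xs @ [(c, count_list xs c)]"
  by (simp add: tk_def nth_append)

lemma length_tk[simp]: "length (tk xs) = length xs" by (simp add: tk_def)

lemma nth_tk: "p < length xs \<Longrightarrow> tk xs ! p = (xs!p, count_list (take p xs) (xs!p))"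
  by (simp add: tk_def)

lemma set_tk: "set (tk xs) = {(c,m). m < count_list xs c}"
  by (induction xs rule: rev_induct) (auto simp: less_Suc_eq split: if_splits)

lemma distinct_tk: "distinct (tk xs)"
  by (induction xs rule: rev_induct) (auto simp: set_tk)

lemma count_filter: "Q c \<Longrightarrow> count_list (filter Q xs) c = count_list xs c"
  by (induction xs) auto

lemma tk_filter: "tk (filter Q xs) = filter (\<lambda>t. Q (fst t)) (tk xs)"
  by (induction xs rule: rev_induct) (auto simp: count_filter)

lemma occ_count: "j \<le> length u \<Longrightarrow> card {k. k < j \<and> u!k = c} = count_list (take j u) c"
proof (induction j)
  case 0 then show ?case by simp
next
  case (Suc j)
  have t: "take (Suc j) u = take j u @ [u!j]" using Suc.prems by (simp add: take_Suc_conv_app_nth)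
  show ?case
  proof (cases "u!j = c")
    case True
    have "{k. k < Suc j \<and> u!k = c} = insert j {k. k < j \<and> u!k = c}" using True by auto
    then show ?thesis using Suc True t by simp
  next
    case False
    have "{k. k < Suc j \<and> u!k = c} = {k. k < j \<and> u!k = c}" using False less_Suc_eq by auto
    then show ?thesis using Suc False t by simp
  qed
qed

definition before :: "'b list \<Rightarrow> 'b \<Rightarrow> 'b \<Rightarrow> bool" where
  "before L a b \<longleftrightarrow> (\<exists>xs ys zs. L = xs @ a # ys @ b # zs)"

lemma before_idx: assumes "i < j" "j < length L" shows "before L (L!i) (L!j)"
proof -
  define D where "D = drop (Suc i) L"
  have L1: "L = take i L @ L!i # D" using assms by (simp add: D_def id_take_nth_drop)
  have jl: "j - Suc i < length D" using assms by (simp add: D_def)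
  have Dj: "D ! (j - Suc i) = L ! j" using assms by (simp add: D_def)
  have "D = take (j - Suc i) D @ D ! (j - Suc i) # drop (Suc (j - Suc i)) D"
    using jl by (simp add: id_take_nth_drop)
  then have "L = take i L @ L!i # take (j - Suc i) D @ L!j # drop (Suc (j - Suc i)) D"
    using L1 Dj by metis
  then show ?thesis unfolding before_def by blast
qed

lemma before_filter: assumes "before L a b" "Q a" "Q b" shows "before (filter Q L) a b"
proof -
  obtain xs ys zs where "L = xs @ a # ys @ b # zs" using assms(1) by (auto simp: before_def)
  then have "filter Q L = filter Q xs @ a # filter Q ys @ b # filter Q zs" using assms by simp
  then show ?thesis unfolding before_def by blast
qed

lemma before_distinct: assumes "distinct L" "before L a b" "before L b a" shows False
proof -
  obtain xs ys zs where 1: "L = xs @ a # ys @ b # zs" using assms(2) by (auto simp: before_def)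
  obtain xs' ys' zs' where 2: "L = xs' @ b # ys' @ a # zs'" using assms(3) by (auto simp: before_def)
  have a1: "L ! length xs = a" "length xs < length L" using 1 by auto
  have b1: "L ! (length xs + Suc (length ys)) = b" "length xs + Suc (length ys) < length L" using 1 by (auto simp: nth_append)
  have b2: "L ! length xs' = b" "length xs' < length L" using 2 by auto
  have a2: "L ! (length xs' + Suc (length ys')) = a" "length xs' + Suc (length ys') < length L" using 2 by (auto simp: nth_append)
  have "length xs = length xs' + Suc (length ys')" using a1 a2 assms(1) nth_eq_iff_index_eq by metis
  moreover have "length xs' = length xs + Suc (length ys)" using b1 b2 assms(1) nth_eq_iff_index_eq by metis
  ultimately show False by simp
qed

lemma count_proj: "a \<in> A \<Longrightarrow> count_list (proj x A) a = count_list x a"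
  unfolding proj_def by (rule count_filter)

lemma proj_comm: "proj (proj x A) B = proj (proj x B) A"
  unfolding proj_def by (simp add: conj_commute)

lemma Dm_disj: assumes "proj sN A = proj (P A) A" shows "Dm A (sN, P) \<inter> A = {}"
proof -
  have "count_list sN a = count_list (P A) a" if "a \<in> A" for a
    using count_proj[OF that, of sN] count_proj[OF that, of "P A"] assms by simp
  then show ?thesis by (auto simp: Dm_def)
qed

lemma Do_not_sub:
  assumes eqA: "proj sN A = proj (P A) A"
  and p: "p \<in> Do Sg A (sN, P)"
  shows "\<not> p \<subseteq> A"
proof
  assume pA: "p \<subseteq> A"
  define theta where "theta = Sg - Dm A (sN,P)"
  define u where "u = proj sN theta"
  define w where "w = proj (P A) theta"
  have "p \<in> {{u!j, u!k} | j k. j < k \<and> k < length u \<and> posmap u w j > posmap u w k}"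
    using p unfolding Do_def Let_def theta_def u_def w_def by simp
  then obtain j k where p_eq: "p = {u!j, u!k}" and jk: "j < k" "k < length u"
     and inv: "posmap u w j > posmap u w k" by blast
  have cnt: "count_list u c = count_list w c" if "c \<in> theta" for c
  proof -
    have "c \<notin> Dm A (sN,P)" using that theta_def by auto
    then have "count_list sN c = count_list (P A) c" by (simp add: Dm_def)
    then show ?thesis using that by (simp add: u_def w_def count_proj)
  qed
  have setu: "set u \<subseteq> theta" by (auto simp: u_def proj_def)
  have pm: "posmap u w i < length w \<and> tk w ! (posmap u w i) = tk u ! i" if ilt: "i < length u" for i
  proof -
    obtain c m where cm: "tk u ! i = (c,m)" by fastforce
    have "(c,m) \<in> set (tk u)" using ilt cm by (metis length_tk nth_mem)
    hence mlt: "m < count_list u c" by (simp add: set_tk)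
    have "c = u ! i" using cm ilt by (simp add: nth_tk)
    hence "c \<in> theta" using setu ilt by auto
    hence "(c,m) \<in> set (tk w)" using mlt cnt by (simp add: set_tk)
    then obtain q where q: "q < length w" "tk w ! q = (c,m)" by (metis in_set_conv_nth length_tk)
    have char: "(r < length w \<and> w!r = u!i \<and> occ w r = occ u i) \<longleftrightarrow> (r < length w \<and> tk w ! r = tk u ! i)" for r
    proof -
      have ou: "occ u i = count_list (take i u) (u!i)" using ilt by (simp add: occ_def occ_count)
      have ow: "r < length w \<Longrightarrow> occ w r = count_list (take r w) (w!r)" by (simp add: occ_def occ_count)
      show ?thesis using ilt ou ow by (auto simp: nth_tk)
    qed
    have "posmap u w i = q"
      unfolding posmap_def
    proof (rule the_equality)
      show "q < length w \<and> w ! q = u ! i \<and> occ w q = occ u i" by (simp only: char[of q]) (simp add: q cm)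
    next
      fix r assume "r < length w \<and> w ! r = u ! i \<and> occ w r = occ u i"
      then have "r < length w" "tk w ! r = tk w ! q" using char q cm by auto
      then show "r = q" using q distinct_tk nth_eq_iff_index_eq by (metis length_tk)
    qed
    then show ?thesis using q cm by simp
  qed
  define Q where "Q = (\<lambda>t :: 'a \<times> nat. fst t \<in> A)"
  have uA: "u!j \<in> A" "u!k \<in> A" using pA p_eq by auto
  have Qj: "Q (tk u ! j)" "Q (tk u ! k)" using uA jk by (auto simp: Q_def nth_tk)
  have b1: "before (tk u) (tk u ! j) (tk u ! k)" using jk by (simp add: before_idx)
  have pmj: "posmap u w j < length w" "tk w ! posmap u w j = tk u ! j" using pm jk by auto
  have pmk: "posmap u w k < length w" "tk w ! posmap u w k = tk u ! k" using pm jk by auto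
  have b2: "before (tk w) (tk u ! k) (tk u ! j)"
    using before_idx[OF inv, of "tk w"] pmj pmk by simp
  have "proj u A = proj w A" unfolding u_def w_def using eqA by (simp add: proj_comm)
  moreover have "tk (proj u A) = filter Q (tk u)" by (simp add: proj_def tk_filter Q_def)
  moreover have "tk (proj w A) = filter Q (tk w)" by (simp add: proj_def tk_filter Q_def)
  ultimately have feq: "filter Q (tk u) = filter Q (tk w)" by simp
  have "before (filter Q (tk w)) (tk u ! j) (tk u ! k)"
    using before_filter[OF b1, of Q] Qj feq by simp
  moreover have "before (filter Q (tk w)) (tk u ! k) (tk u ! j)"
    using before_filter[OF b2, of Q] Qj by simp
  moreover have "distinct (filter Q (tk w))" by (rule distinct_filter[OF distinct_tk])
  ultimately show False using before_distinct[of "filter Q (tk w)"] by blast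
qed

lemma disc_not_sub:
  assumes "ce \<in> CED Omega Obs" "A \<in> Omega" "is_discrepancy Sg Omega ce delta"
  shows "\<not> delta \<subseteq> A"
proof
  assume dA: "delta \<subseteq> A"
  obtain sN P where ce: "ce = (sN,P)" by fastforce
  have eq: "proj sN A = proj (P A) A" using assms(1,2) by (auto simp: CED_def ce)
  from assms(3,2) have "delta \<inter> Dm A ce \<noteq> {} \<or> (\<exists>p\<in>Do Sg A ce. p \<subseteq> delta)"
    by (auto simp: is_discrepancy_def)
  then show False
  proof
    assume "delta \<inter> Dm A ce \<noteq> {}" with Dm_disj[of sN A P, OF eq] dA ce show False by auto
  next
    assume "\<exists>p\<in>Do Sg A ce. p \<subseteq> delta" with Do_not_sub[of sN A P, OF eq] dA ce show False by blast
  qed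
qed

lemma CED_empty_models:
  assumes obs: "observation Sg Obs" and ced: "CED Omega Obs = {}"
  shows "models Sg Omega Obs"
proof -
  define L where "L = (\<lambda>A. {proj s A | s. Obs s = Some True})"
  have 1: "\<forall>A\<in>Omega. L A \<subseteq> lists A" by (auto simp: L_def proj_def)
  have 2: "s \<in> {w \<in> lists Sg. \<forall>A\<in>Omega. proj w A \<in> L A} \<longleftrightarrow> Obs s = Some True"
    if s: "s \<in> dom Obs" for s
  proof
    assume "Obs s = Some True" then show "s \<in> {w \<in> lists Sg. \<forall>A\<in>Omega. proj w A \<in> L A}"
      using s obs by (auto simp: L_def observation_def)
  next
    assume mem: "s \<in> {w \<in> lists Sg. \<forall>A\<in>Omega. proj w A \<in> L A}"
    show "Obs s = Some True"
    proof (rule ccontr)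
      assume "Obs s \<noteq> Some True"
      with s have F: "Obs s = Some False" by auto
      from mem have "\<forall>A\<in>Omega. \<exists>t. Obs t = Some True \<and> proj s A = proj t A" by (auto simp: L_def)
      from bchoice[OF this] obtain Pf where Pf: "\<forall>A\<in>Omega. Obs (Pf A) = Some True \<and> proj s A = proj (Pf A) A"
        by blast
      have "(s, restrict Pf Omega) \<in> CED Omega Obs" using Pf F unfolding CED_def
        by (auto simp: restrict_PiE_iff)
      with ced show False by simp
    qed
  qed
  show ?thesis unfolding models_def Let_def
  proof (intro exI[of _ L] conjI)
    show "\<forall>A\<in>Omega. L A \<subseteq> lists A" using 1 .
    show "\<forall>s\<in>dom Obs. (s \<in> {w \<in> lists Sg. \<forall>A\<in>Omega. proj w A \<in> L A}) = (Obs s = Some True)"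
      using 2 by blast
  qed
qed

lemma step_props:
  assumes "step Sg Obs Om Om'"
  shows "Om \<subseteq> Om'" "\<exists>d\<in>Om'. \<forall>A\<in>Om. \<not> d \<subseteq> A" "Om' - Om \<subseteq> Pow Sg"
proof -
  obtain S delta where S: "S \<subseteq> CED Om Obs" "S \<noteq> {}" "\<forall>ce\<in>S. delta ce \<in> Disc Sg Om ce"
    "Om' = Om \<union> delta ` S" using assms by (auto simp: step_def)
  show "Om \<subseteq> Om'" using S by auto
  obtain ce where ce: "ce \<in> S" using S by auto
  have c1: "ce \<in> CED Om Obs" using S ce by auto
  have c2: "is_discrepancy Sg Om ce (delta ce)" using S ce by (auto simp: Disc_def)
  have "\<forall>A\<in>Om. \<not> delta ce \<subseteq> A" using disc_not_sub[OF c1 _ c2] by blast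
  moreover have "delta ce \<in> Om'" using S ce by auto
  ultimately show "\<exists>d\<in>Om'. \<forall>A\<in>Om. \<not> d \<subseteq> A" by blast
  show "Om' - Om \<subseteq> Pow Sg" using S by (auto simp: Disc_def is_discrepancy_def)
qed

lemma step_psub: "step Sg Obs Om Om' \<Longrightarrow> Om \<subset> Om'"
  using step_props[of Sg Obs Om Om'] by blast

lemma step_pow: "step Sg Obs Om Om' \<Longrightarrow> Om \<subseteq> Pow Sg \<Longrightarrow> Om' \<subseteq> Pow Sg"
  using step_props(3)[of Sg Obs Om Om'] by blast

lemma full_step_step: "full_step Sg Obs Om Om' \<Longrightarrow> step Sg Obs Om Om'"
  unfolding full_step_def step_def by blast

lemma run_props:
  assumes run: "is_run (step Sg Obs) Oms" and h: "hd Oms \<subseteq> Pow Sg" and fin: "finite Sg"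
  shows "\<And>i. i < length Oms \<Longrightarrow> Oms!i \<subseteq> Pow Sg \<and> i \<le> card (Oms ! i)"
    and "\<And>i j. i \<le> j \<Longrightarrow> j < length Oms \<Longrightarrow> Oms!i \<subseteq> Oms!j"
proof -
  have ne: "Oms \<noteq> []" and st: "\<And>i. Suc i < length Oms \<Longrightarrow> step Sg Obs (Oms!i) (Oms!Suc i)"
    using run by (auto simp: is_run_def)
  show "i < length Oms \<Longrightarrow> Oms!i \<subseteq> Pow Sg \<and> i \<le> card (Oms ! i)" for i
  proof (induction i)
    case 0 then show ?case using h ne by (simp add: hd_conv_nth)
  next
    case (Suc i)
    then have IH: "Oms!i \<subseteq> Pow Sg" "i \<le> card (Oms!i)" by auto
    have s: "step Sg Obs (Oms!i) (Oms!Suc i)" using st Suc.prems .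
    have p: "Oms!Suc i \<subseteq> Pow Sg" using step_pow[OF s IH(1)] .
    have "finite (Oms!Suc i)" using p fin finite_subset by blast
    then have "card (Oms!i) < card (Oms!Suc i)" by (rule psubset_card_mono[OF _ step_psub[OF s]])
    then show ?case using p IH by simp
  qed
  show "i \<le> j \<Longrightarrow> j < length Oms \<Longrightarrow> Oms!i \<subseteq> Oms!j" for i j
  proof (induction j)
    case 0 then show ?case by simp
  next
    case (Suc j)
    show ?case
    proof (cases "i = Suc j")
      case False
      then have "Oms!i \<subseteq> Oms!j" using Suc by simp
      moreover have "Oms!j \<subseteq> Oms!Suc j" using step_psub[OF st[OF Suc.prems(2)]] by blast
      ultimately show ?thesis by blast
    qed simp
  qed
qed

theorem mainTheorem12:
  fixes Sg :: "'a set" and Omega0 :: "'a set set" and Obs :: "'a list \<Rightarrow> bool option"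
  assumes "finite Sg"
    and "distribution Sg Omega0"
    and "observation Sg Obs"
    and "\<not> models Sg Omega0 Obs"
  shows "(\<nexists>f :: nat \<Rightarrow> 'a set set. f 0 = Omega0 \<and> (\<forall>k. step Sg Obs (f k) (f (Suc k))))
    \<and> (\<forall>Oms. is_run (step Sg Obs) Oms \<and> hd Oms = Omega0 \<and> CED (last Oms) Obs = {}
          \<longrightarrow> models Sg (last Oms) Obs \<and> strictly_refines Omega0 (last Oms))
    \<and> (\<forall>Oms. is_run (full_step Sg Obs) Oms \<and> hd Oms = Omega0 \<and> CED (last Oms) Obs = {}
          \<longrightarrow> length Oms - 1 \<le> card (Pow Sg))"
proof (intro conjI allI impI)
  have O0: "Omega0 \<subseteq> Pow Sg" using assms(2) by (auto simp: distribution_def)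
  have finP: "finite (Pow Sg)" using assms(1) by simp
  show "\<nexists>f :: nat \<Rightarrow> 'a set set. f 0 = Omega0 \<and> (\<forall>k. step Sg Obs (f k) (f (Suc k)))"
  proof
    assume "\<exists>f :: nat \<Rightarrow> 'a set set. f 0 = Omega0 \<and> (\<forall>k. step Sg Obs (f k) (f (Suc k)))"
    then obtain f :: "nat \<Rightarrow> 'a set set" where f0: "f 0 = Omega0"
      and fs: "\<And>k. step Sg Obs (f k) (f (Suc k))" by blast
    have sub: "f k \<subseteq> Pow Sg \<and> k \<le> card (f k)" for k
    proof (induction k)
      case 0 then show ?case using f0 O0 by simp
    next
      case (Suc k)
      have p: "f (Suc k) \<subseteq> Pow Sg" using step_pow[OF fs] Suc by blast
      have "finite (f (Suc k))" using p finP finite_subset by blast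
      then have "card (f k) < card (f (Suc k))" by (rule psubset_card_mono[OF _ step_psub[OF fs]])
      then show ?case using p Suc by simp
    qed
    define N where "N = Suc (card (Pow Sg))"
    have sN: "f N \<subseteq> Pow Sg" "N \<le> card (f N)" using sub[of N] by auto
    have "card (f N) \<le> card (Pow Sg)" using card_mono[OF finP sN(1)] .
    then show False using sN(2) N_def by simp
  qed
next
  fix Oms assume a: "is_run (step Sg Obs) Oms \<and> hd Oms = Omega0 \<and> CED (last Oms) Obs = {}"
  have O0: "Omega0 \<subseteq> Pow Sg" using assms(2) by (auto simp: distribution_def)
  have ne: "Oms \<noteq> []" using a by (auto simp: is_run_def)
  have hd0: "Oms ! 0 = Omega0" using a ne by (simp add: hd_conv_nth)
  have lst: "last Oms = Oms ! (length Oms - 1)" using ne by (simp add: last_conv_nth)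
  show "models Sg (last Oms) Obs" using CED_empty_models[OF assms(3)] a by blast
  show "strictly_refines Omega0 (last Oms)"
  proof (cases "length Oms = 1")
    case True
    then have "last Oms = Omega0" using lst hd0 by simp
    then show ?thesis using CED_empty_models[OF assms(3)] a assms(4) by metis
  next
    case False
    then have len: "1 < length Oms" using ne by (cases Oms) auto
    have s: "step Sg Obs (Oms!0) (Oms!1)" using a len by (auto simp: is_run_def)
    obtain d where d: "d \<in> Oms!1" "\<forall>A\<in>Omega0. \<not> d \<subseteq> A" using step_props(2)[OF s] hd0 by auto
    have "Oms!1 \<subseteq> last Oms" using run_props(2)[of Sg Obs Oms 1 "length Oms - 1"] a O0 assms(1) len lst
      by simp
    moreover have "Omega0 \<subseteq> last Oms" using run_props(2)[of Sg Obs Oms 0 "length Oms - 1"] a O0 assms(1) len lst hd0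
      by simp
    ultimately show ?thesis using d unfolding strictly_refines_def refines_def by blast
  qed
next
  fix Oms assume a: "is_run (full_step Sg Obs) Oms \<and> hd Oms = Omega0 \<and> CED (last Oms) Obs = {}"
  have O0: "Omega0 \<subseteq> Pow Sg" using assms(2) by (auto simp: distribution_def)
  have run: "is_run (step Sg Obs) Oms" using a full_step_step unfolding is_run_def by blast
  have ne: "Oms \<noteq> []" using a by (auto simp: is_run_def)
  have lst: "last Oms = Oms ! (length Oms - 1)" using ne by (simp add: last_conv_nth)
  have h: "hd Oms \<subseteq> Pow Sg" using a O0 by simp
  have ln: "length Oms - 1 < length Oms" using ne by simp
  have r: "Oms ! (length Oms - 1) \<subseteq> Pow Sg" "length Oms - 1 \<le> card (Oms ! (length Oms - 1))"
    using run_props(1)[OF run h assms(1) ln] by auto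
  have "finite (Pow Sg)" using assms(1) by simp
  from card_mono[OF this r(1)] r(2) show "length Oms - 1 \<le> card (Pow Sg)" by simp
qed

end
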